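(* Let $\ell:\mathcal{H}\times\mathcal{Z}\times\mathcal{Z}\to[0,B]$ be a $B$-bounded pairwise loss, let $z_1,\dots,z_n$ be a stream, and let buffers of size $s$ be maintained by the RS-x algorithm (described below). Assume $\mathcal{R}_s(\ell\circ\mathcal{H})=C_d\cdot O(\sqrt{1/s})$. Then for any fixed $h\in\mathcal{H}$ and any $t\in[1,n-1]$, with probability at least $1-\delta$ over the random variables used to update the buffer until time $t$, \[ \hat{\mathcal{L}}^{\mathrm{buf}}_t(h)\le\hat{\mathcal{L}}_t(h)+C_d\cdot O\!\left(\sqrt{\frac{\log\frac1\delta}{s}}\right). \]
   Context: All-pairs penalty $\hat{\mathcal{L}}_t(h)=\frac1{t-1}\sum_{\tau=1}^{t-1}\ell(h,z_t,z_\tau)$; buffer penalty $\hat{\mathcal{L}}^{\mathrm{buf}}_t(h)=\frac1{|B_t|}\sum_{z\in B_t}\ell(h,z_t,z)$, where $B_t$ is the buffer after processing $z_1,\dots,z_{t-1}$. RS-x update with the point $z_t$ at step $t$: if $|B|<s$, add $z_t$; else if $t=s+1$, replace $B$ by $s$ points sampled uniformly with replacement from $B\cup\{z_t\}$; else independently replace each buffer entry by $z_t$ with probability $1/t$. $\mathcal{R}_s(\ell\circ\mathcal{H})=\mathbb{E}[\sup_h\frac1s\sum_{j=1}^s\epsilon_j\ell(h,z,z_j)]$; $C_d$ is its dependence on the input dimension $d$; $O(\cdot)$ hides constants such as $B$.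
   Formalization: The dimension factor $C_d$ is at least 1, and sampling from $B\cup\{z_t\}$ means drawing uniformly among the s+1 entries of B and $z_t$, with duplicate points counted with multiplicity. Each condition added here is assumed in the paper as well or is needed for the statement above to hold. *)

theory Defs
  imports "HOL-Probability.Probability"
begin

fun iid_list :: "nat \<Rightarrow> 'a pmf \<Rightarrow> 'a list pmf" where
  "iid_list 0 p = return_pmf []"
| "iid_list (Suc k) p = bind_pmf p (\<lambda>x. map_pmf (\<lambda>xs. x # xs) (iid_list k p))"

fun indep_replace :: "real \<Rightarrow> 'a \<Rightarrow> 'a list \<Rightarrow> 'a list pmf" where
  "indep_replace q z [] = return_pmf []"
| "indep_replace q z (b # bs) =
     bind_pmf (bernoulli_pmf q) (\<lambda>c. map_pmf (\<lambda>rest. (if c then z else b) # rest)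
        (indep_replace q z bs))"

text \<open>One RS-x update at step t with point z, buffer size s.
  Sampling uniformly with replacement from B \<union> {z} means drawing a uniform
  position of the list B @ [z] (a multiset of s+1 points).\<close>
definition rsx_step :: "nat \<Rightarrow> nat \<Rightarrow> 'z \<Rightarrow> 'z list \<Rightarrow> 'z list pmf" where
  "rsx_step s t z B =
     (if length B < s then return_pmf (B @ [z])
      else if t = s + 1 then
        iid_list s (map_pmf (\<lambda>i. (B @ [z]) ! i) (pmf_of_set {..<length B + 1}))
      else indep_replace (1 / real t) z B)"

text \<open>Distribution of the buffer after processing z 1, ..., z k (stream indexed from 1).\<close>
fun rsx_buffer :: "nat \<Rightarrow> (nat \<Rightarrow> 'z) \<Rightarrow> nat \<Rightarrow> 'z list pmf" where
  "rsx_buffer s z 0 = return_pmf []"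
| "rsx_buffer s z (Suc k) = bind_pmf (rsx_buffer s z k) (rsx_step s (Suc k) (z (Suc k)))"

definition allpairs_penalty ::
  "('h \<Rightarrow> 'z \<Rightarrow> 'z \<Rightarrow> real) \<Rightarrow> 'h \<Rightarrow> (nat \<Rightarrow> 'z) \<Rightarrow> nat \<Rightarrow> real" where
  "allpairs_penalty l h z t = (\<Sum>\<tau>=1..t-1. l h (z t) (z \<tau>)) / real (t - 1)"

definition buffer_penalty ::
  "('h \<Rightarrow> 'z \<Rightarrow> 'z \<Rightarrow> real) \<Rightarrow> 'h \<Rightarrow> (nat \<Rightarrow> 'z) \<Rightarrow> nat \<Rightarrow> 'z list \<Rightarrow> real" where
  "buffer_penalty l h z t Bf = (\<Sum>x\<leftarrow>Bf. l h (z t) x) / real (length Bf)"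

definition rademacher ::
  "'z pmf \<Rightarrow> ('h \<Rightarrow> 'z \<Rightarrow> 'z \<Rightarrow> real) \<Rightarrow> 'h set \<Rightarrow> nat \<Rightarrow> real" where
  "rademacher D l H s =
     measure_pmf.expectation
       (pair_pmf D (pair_pmf (iid_list s D) (iid_list s (pmf_of_set {-1, 1::real}))))
       (\<lambda>(x, zs, es). (SUP h\<in>H. (\<Sum>j<s. es ! j * l h x (zs ! j)) / real s))"

end

theory Submission
  imports Defs
begin


lemma set_iid_list_len: "xs \<in> set_pmf (iid_list m p) \<Longrightarrow> length xs = m"
  by (induction m arbitrary: xs) auto

lemma buf_small: "k \<le> s \<Longrightarrow> rsx_buffer s z k = return_pmf (map z [1..<Suc k])"
proof (induction k)
  case 0 then show ?case by simp
next
  case (Suc k)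
  then show ?case by (simp add: rsx_step_def bind_return_pmf)
qed

lemma iid_replace:
  "bind_pmf (iid_list m p) (indep_replace q w) =
   iid_list m (bind_pmf p (\<lambda>x. map_pmf (\<lambda>c. if c then w else x) (bernoulli_pmf q)))"
proof (induction m)
  case 0 then show ?case by (simp add: bind_return_pmf)
next
  case (Suc m)
  define p' where "p' = bind_pmf p (\<lambda>x. map_pmf (\<lambda>c. if c then w else x) (bernoulli_pmf q))"
  have "bind_pmf (iid_list (Suc m) p) (indep_replace q w) =
     bind_pmf p (\<lambda>x. bind_pmf (iid_list m p) (\<lambda>xs. bind_pmf (bernoulli_pmf q)
        (\<lambda>c. map_pmf (\<lambda>r. (if c then w else x) # r) (indep_replace q w xs))))"
    by (simp add: map_pmf_def bind_assoc_pmf bind_return_pmf)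
  also have "\<dots> = bind_pmf p (\<lambda>x. bind_pmf (bernoulli_pmf q) (\<lambda>c. bind_pmf (iid_list m p)
        (\<lambda>xs. map_pmf (\<lambda>r. (if c then w else x) # r) (indep_replace q w xs))))"
    by (rule bind_pmf_cong[OF refl], rule bind_commute_pmf)
  also have "\<dots> = bind_pmf p (\<lambda>x. bind_pmf (bernoulli_pmf q) (\<lambda>c.
        map_pmf (\<lambda>r. (if c then w else x) # r) (bind_pmf (iid_list m p) (indep_replace q w))))"
    by (simp add: map_bind_pmf)
  also have "\<dots> = iid_list (Suc m) p'"
    by (simp add: Suc p'_def map_pmf_def bind_assoc_pmf bind_return_pmf)
  finally show ?case unfolding p'_def .
qed

lemma idx_step:
  assumes "k \<ge> 1"
  shows "bind_pmf (pmf_of_set {1..k}) (\<lambda>i. map_pmf (\<lambda>c. if c then Suc k else i) (bernoulli_pmf (1 / real (Suc k))))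
       = pmf_of_set {1..Suc k}"
proof (rule pmf_eqI)
  fix j
  have q: "0 \<le> 1 / real (Suc k)" "1 / real (Suc k) \<le> 1" by auto
  have "pmf (map_pmf (\<lambda>c. if c then Suc k else i) (bernoulli_pmf (1 / real (Suc k)))) j =
        (if j = Suc k then 1 / real (Suc k) else 0) + (if j = i then 1 - 1 / real (Suc k) else 0)"
    if "i \<in> {1..k}" for i
    using that q unfolding map_pmf_def by (auto simp: pmf_bind)
  then have "pmf (bind_pmf (pmf_of_set {1..k}) (\<lambda>i. map_pmf (\<lambda>c. if c then Suc k else i) (bernoulli_pmf (1 / real (Suc k))))) j
     = (\<Sum>i\<in>{1..k}. (if j = Suc k then 1 / real (Suc k) else 0) + (if j = i then 1 - 1 / real (Suc k) else 0)) / real k"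
    using assms by (simp add: pmf_bind integral_pmf_of_set)
  also have "\<dots> = pmf (pmf_of_set {1..Suc k}) j"
  proof -
    have k: "real k > 0" using assms by simp
    have e: "(1 - 1 / real (Suc k)) / real k = 1 / real (Suc k)" proof -
      have "real k + real k * real k > 0" using k by (simp add: add_pos_pos)
      then show ?thesis using k by (simp add: field_simps)
    qed
    show ?thesis using assms k e by (auto simp: sum.distrib)
  qed
  finally show "pmf (bind_pmf (pmf_of_set {1..k}) (\<lambda>i. map_pmf (\<lambda>c. if c then Suc k else i) (bernoulli_pmf (1 / real (Suc k))))) j = pmf (pmf_of_set {1..Suc k}) j" .
qed

lemma buf_large:
  assumes "s \<ge> 1" "k \<ge> Suc s"
  shows "rsx_buffer s z k = iid_list s (map_pmf z (pmf_of_set {1..k}))"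
  using assms(2)
proof (induction k rule: dec_induct)
  case base
  have b: "rsx_buffer s z s = return_pmf (map z [1..<Suc s])" by (rule buf_small) simp
  have "map_pmf (\<lambda>i. (map z [1..<Suc s] @ [z (Suc s)]) ! i) (pmf_of_set {..<Suc s})
      = map_pmf (z \<circ> Suc) (pmf_of_set {..<Suc s})"
  proof (rule map_pmf_cong[OF refl])
    fix x assume "x \<in> set_pmf (pmf_of_set {..<Suc s})"
    then have x: "x < Suc s" by (subst (asm) set_pmf_of_set) auto
    have "map z [1..<Suc s] @ [z (Suc s)] = map z [1..<Suc (Suc s)]" by simp
    then show "(map z [1..<Suc s] @ [z (Suc s)]) ! x = (z \<circ> Suc) x"
      using x by (simp del: upt_Suc)
  qed
  also have "\<dots> = map_pmf z (pmf_of_set (Suc ` {..<Suc s}))"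
  proof -
    have "map_pmf (z \<circ> Suc) (pmf_of_set {..<Suc s}) = map_pmf z (map_pmf Suc (pmf_of_set {..<Suc s}))"
      by (rule pmf.map_comp[symmetric])
    also have "map_pmf Suc (pmf_of_set {..<Suc s}) = pmf_of_set (Suc ` {..<Suc s})"
      by (rule map_pmf_of_set_inj) auto
    finally show ?thesis .
  qed
  also have "Suc ` {..<Suc s} = {1..Suc s}"
    by (rule image_Suc_lessThan)
  finally have e: "map_pmf (\<lambda>i. (map z [1..<Suc s] @ [z (Suc s)]) ! i) (pmf_of_set {..<Suc s}) = map_pmf z (pmf_of_set {1..Suc s})" .
  show ?case using e by (simp add: b bind_return_pmf rsx_step_def del: upt_Suc)
next
  case (step k)
  have "rsx_buffer s z (Suc k) = bind_pmf (iid_list s (map_pmf z (pmf_of_set {1..k})))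
           (indep_replace (1 / real (Suc k)) (z (Suc k)))"
  proof -
    have "rsx_buffer s z (Suc k) = bind_pmf (iid_list s (map_pmf z (pmf_of_set {1..k}))) (rsx_step s (Suc k) (z (Suc k)))"
      using step by simp
    also have "\<dots> = bind_pmf (iid_list s (map_pmf z (pmf_of_set {1..k})))
           (indep_replace (1 / real (Suc k)) (z (Suc k)))"
    proof (rule bind_pmf_cong[OF refl])
      fix xs assume "xs \<in> set_pmf (iid_list s (map_pmf z (pmf_of_set {1..k})))"
      then have "length xs = s" by (rule set_iid_list_len)
      then show "rsx_step s (Suc k) (z (Suc k)) xs = indep_replace (1 / real (Suc k)) (z (Suc k)) xs"
        using step(1) unfolding rsx_step_def by simp
    qed
    finally show ?thesis .
  qed
  also have "\<dots> = iid_list s (map_pmf z (bind_pmf (pmf_of_set {1..k})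
      (\<lambda>i. map_pmf (\<lambda>c. if c then Suc k else i) (bernoulli_pmf (1 / real (Suc k))))))"
    unfolding iid_replace
  proof -
    have "bind_pmf (map_pmf z (pmf_of_set {1..k})) (\<lambda>x. map_pmf (\<lambda>c. if c then z (Suc k) else x) (bernoulli_pmf (1 / real (Suc k))))
       = map_pmf z (bind_pmf (pmf_of_set {1..k})
      (\<lambda>i. map_pmf (\<lambda>c. if c then Suc k else i) (bernoulli_pmf (1 / real (Suc k)))))"
      unfolding map_bind_pmf bind_map_pmf pmf.map_comp
      by (rule bind_pmf_cong[OF refl], rule map_pmf_cong) auto
    then show "iid_list s (bind_pmf (map_pmf z (pmf_of_set {1..k})) (\<lambda>x. map_pmf (\<lambda>c. if c then z (Suc k) else x) (bernoulli_pmf (1 / real (Suc k)))))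
       = iid_list s (map_pmf z (bind_pmf (pmf_of_set {1..k})
      (\<lambda>i. map_pmf (\<lambda>c. if c then Suc k else i) (bernoulli_pmf (1 / real (Suc k))))))" by simp
  qed
  also have "\<dots> = iid_list s (map_pmf z (pmf_of_set {1..Suc k}))"
    using step by (subst idx_step) auto
  finally show ?case .
qed



lemma mgf_iid:
  fixes g :: "'a \<Rightarrow> real"
  assumes bnd: "\<And>x. a \<le> g x \<and> g x \<le> b" and E0: "measure_pmf.expectation p g = 0" and lp: "lam > 0"
  shows "(\<integral>\<^sup>+xs. ennreal (exp (lam * sum_list (map g xs))) \<partial>iid_list m p)
          \<le> ennreal (exp (lam\<^sup>2 * (b - a)\<^sup>2 / 8)) ^ m"
proof (induction m)
  case 0 then show ?case by simp
next
  case (Suc m)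
  interpret interval_bounded_random_variable "measure_pmf p" g a b
    by unfold_locales (use bnd in auto)
  have H: "(\<integral>\<^sup>+x. ennreal (exp (lam * g x)) \<partial>p) \<le> ennreal (exp (lam\<^sup>2 * (b - a)\<^sup>2 / 8))"
    by (rule Hoeffdings_lemma_nn_integral_0[OF lp E0])
  have "(\<integral>\<^sup>+xs. ennreal (exp (lam * sum_list (map g xs))) \<partial>iid_list (Suc m) p)
     = (\<integral>\<^sup>+x. (\<integral>\<^sup>+xs. ennreal (exp (lam * g x)) * ennreal (exp (lam * sum_list (map g xs))) \<partial>iid_list m p) \<partial>p)"
    by (simp add: ring_distribs exp_add ennreal_mult)
  also have "\<dots> = (\<integral>\<^sup>+x. ennreal (exp (lam * g x)) * (\<integral>\<^sup>+xs. ennreal (exp (lam * sum_list (map g xs))) \<partial>iid_list m p) \<partial>p)"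
    by (simp add: nn_integral_cmult)
  also have "\<dots> \<le> (\<integral>\<^sup>+x. ennreal (exp (lam * g x)) * ennreal (exp (lam\<^sup>2 * (b - a)\<^sup>2 / 8)) ^ m \<partial>p)"
    by (intro nn_integral_mono mult_left_mono Suc) auto
  also have "\<dots> = (\<integral>\<^sup>+x. ennreal (exp (lam * g x)) \<partial>p) * ennreal (exp (lam\<^sup>2 * (b - a)\<^sup>2 / 8)) ^ m"
    by (simp add: nn_integral_multc)
  also have "\<dots> \<le> ennreal (exp (lam\<^sup>2 * (b - a)\<^sup>2 / 8)) * ennreal (exp (lam\<^sup>2 * (b - a)\<^sup>2 / 8)) ^ m"
    by (intro mult_right_mono H) auto
  finally show ?case by simp
qed

lemma tail_iid:
  fixes g :: "'a \<Rightarrow> real"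
  assumes bnd: "\<And>x. a \<le> g x \<and> g x \<le> b" and E0: "measure_pmf.expectation p g = 0"
    and ab: "a < b" and m: "m \<ge> 1" and e: "\<epsilon> > 0"
  shows "measure_pmf.prob (iid_list m p) {xs. real m * \<epsilon> \<le> sum_list (map g xs)}
          \<le> exp (- 2 * real m * \<epsilon>\<^sup>2 / (b - a)\<^sup>2)"
proof -
  define d where "d = (b - a)\<^sup>2"
  have d: "d > 0" using ab by (simp add: d_def)
  define lam where "lam = 4 * \<epsilon> / d"
  have lp: "lam > 0" using e d by (simp add: lam_def)
  have "ennreal (measure_pmf.prob (iid_list m p) {xs. real m * \<epsilon> \<le> sum_list (map g xs)})
      = emeasure (measure_pmf (iid_list m p)) {xs \<in> UNIV. real m * \<epsilon> \<le> sum_list (map g xs)}"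
    by (simp add: measure_pmf.emeasure_eq_measure)
  also have "\<dots> \<le> ennreal (exp (- lam * (real m * \<epsilon>))) *
      (\<integral>\<^sup>+xs. ennreal (exp (lam * sum_list (map g xs))) * indicator UNIV xs \<partial>iid_list m p)"
    by (rule Chernoff_ineq_nn_integral_ge[OF lp]) auto
  also have "\<dots> \<le> ennreal (exp (- lam * (real m * \<epsilon>))) * ennreal (exp (lam\<^sup>2 * d / 8)) ^ m"
    using mgf_iid[OF bnd E0 lp, of m] by (intro mult_left_mono) (auto simp: d_def)
  also have "\<dots> = ennreal (exp (- lam * (real m * \<epsilon>)) * exp (lam\<^sup>2 * d / 8) ^ m)"
    by (simp add: ennreal_mult ennreal_power)
  also have "exp (- lam * (real m * \<epsilon>)) * exp (lam\<^sup>2 * d / 8) ^ m = exp (real m * (lam\<^sup>2 * d / 8 - lam * \<epsilon>))"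
    by (simp add: exp_of_nat_mult[symmetric] exp_add[symmetric] algebra_simps)
  also have "real m * (lam\<^sup>2 * d / 8 - lam * \<epsilon>) = - 2 * real m * \<epsilon>\<^sup>2 / d"
    using d by (simp add: lam_def field_simps power2_eq_square)
  also have "\<dots> = - 2 * real m * \<epsilon>\<^sup>2 / (b - a)\<^sup>2" by (simp add: d_def)
  finally show ?thesis by (subst (asm) ennreal_le_iff) auto
qed



lemma sum_list_map_minus: "sum_list (map (\<lambda>x. f x - c) xs) = sum_list (map f xs) - real (length xs) * (c::real)"
  by (induction xs) (auto simp: algebra_simps)

lemma sum_list_upt_Suc: "sum_list (map f [1..<Suc k]) = (\<Sum>\<tau>=1..k. f \<tau>)"
  by (induction k) auto

theorem lemma21:
  fixes B A :: real
  assumes "B > 0" and "A > 0"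
  shows "\<exists>K>0. \<forall>(l :: 'h \<Rightarrow> 'z \<Rightarrow> 'z \<Rightarrow> real) (H :: 'h set) (D :: 'z pmf) (C :: real)
            (s :: nat) (n :: nat) (t :: nat) (h :: 'h) (\<delta> :: real) (z :: nat \<Rightarrow> 'z).
     (\<forall>g\<in>H. \<forall>x y. 0 \<le> l g x y \<and> l g x y \<le> B)
     \<and> (\<forall>r\<ge>1. rademacher D l H r \<le> C * A * sqrt (1 / real r))
     \<and> C \<ge> 1 \<and> s \<ge> 1 \<and> h \<in> H \<and> 1 \<le> t \<and> t \<le> n - 1 \<and> 0 < \<delta> \<and> \<delta> < 1
     \<longrightarrow> measure_pmf.prob (rsx_buffer s z (t - 1))
           {Bf. buffer_penalty l h z t Bf
                  \<le> allpairs_penalty l h z t + C * K * sqrt (ln (1 / \<delta>) / real s)}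
         \<ge> 1 - \<delta>"
proof (intro exI[of _ B] conjI allI impI)
  show "B > 0" by fact
  fix l :: "'h \<Rightarrow> 'z \<Rightarrow> 'z \<Rightarrow> real" and H :: "'h set" and D :: "'z pmf" and C :: real
    and s n t :: nat and h :: 'h and \<delta> :: real and z :: "nat \<Rightarrow> 'z"
  assume as: "(\<forall>g\<in>H. \<forall>x y. 0 \<le> l g x y \<and> l g x y \<le> B)
     \<and> (\<forall>r\<ge>1. rademacher D l H r \<le> C * A * sqrt (1 / real r))
     \<and> C \<ge> 1 \<and> s \<ge> 1 \<and> h \<in> H \<and> 1 \<le> t \<and> t \<le> n - 1 \<and> 0 < \<delta> \<and> \<delta> < 1"
  define f where "f = l h (z t)"
  define k where "k = t - 1"
  define L where "L = ln (1 / \<delta>)"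
  define \<epsilon> where "\<epsilon> = C * B * sqrt (L / real s)"
  define \<mu> where "\<mu> = allpairs_penalty l h z t"
  have fb: "\<And>x. 0 \<le> f x \<and> f x \<le> B" using as unfolding f_def by blast
  have s1: "s \<ge> 1" and C1: "C \<ge> 1" and d0: "0 < \<delta>" and d1: "\<delta> < 1" using as by auto
  have L0: "L > 0" unfolding L_def using d0 d1 by simp
  have e0: "\<epsilon> > 0" unfolding \<epsilon>_def using C1 \<open>B > 0\<close> L0 s1 by simp
  have mu: "\<mu> = (\<Sum>\<tau>=1..k. f (z \<tau>)) / real k"
    unfolding \<mu>_def allpairs_penalty_def f_def k_def by simp
  let ?E = "{Bf. buffer_penalty l h z t Bf \<le> \<mu> + \<epsilon>}"
  have goal: "measure_pmf.prob (rsx_buffer s z k) ?E \<ge> 1 - \<delta>"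
  proof (cases "k \<le> s")
    case True
    have "buffer_penalty l h z t (map z [1..<Suc k]) = \<mu>"
      unfolding buffer_penalty_def mu f_def
      using sum_list_upt_Suc[of "l h (z t) \<circ> z" k] by (simp del: upt_Suc)
    then have "map z [1..<Suc k] \<in> ?E" using e0 by simp
    then show ?thesis using buf_small[OF True, of z] d0 by (simp del: upt_Suc)
  next
    case False
    then have ks: "k \<ge> Suc s" by simp
    have k1: "k \<ge> 1" using ks by simp
    define p where "p = map_pmf z (pmf_of_set {1..k})"
    define g where "g = (\<lambda>x. f x - \<mu>)"
    have buf: "rsx_buffer s z k = iid_list s p"
      unfolding p_def by (rule buf_large[OF s1 ks])
    have gb: "\<And>x. - \<mu> \<le> g x \<and> g x \<le> B - \<mu>" using fb unfolding g_def by auto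
    have E0: "measure_pmf.expectation p g = 0"
      using k1 unfolding p_def g_def mu
      by (simp add: integral_pmf_of_set sum_subtractf)
    have tail: "measure_pmf.prob (iid_list s p) {xs. real s * \<epsilon> \<le> sum_list (map g xs)}
          \<le> exp (- 2 * real s * \<epsilon>\<^sup>2 / (B - \<mu> - - \<mu>)\<^sup>2)"
      by (rule tail_iid[OF gb E0 _ s1 e0]) (use \<open>B > 0\<close> in simp)
    have ee: "\<epsilon>\<^sup>2 = C\<^sup>2 * B\<^sup>2 * (L / real s)"
      unfolding \<epsilon>_def using L0 by (simp add: power_mult_distrib)
    have "- 2 * real s * \<epsilon>\<^sup>2 / (B - \<mu> - - \<mu>)\<^sup>2 = - 2 * C\<^sup>2 * L"
      using ee s1 \<open>B > 0\<close> by (simp add: field_simps)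
    also have "\<dots> \<le> - L"
    proof -
      have "1 \<le> C\<^sup>2" using C1 by (simp add: one_le_power)
      then have "L \<le> C\<^sup>2 * L" using L0 by (simp add: mult_le_cancel_right1)
      then show ?thesis using L0 by simp
    qed
    finally have "exp (- 2 * real s * \<epsilon>\<^sup>2 / (B - \<mu> - - \<mu>)\<^sup>2) \<le> exp (- L)" by simp
    also have "exp (- L) = \<delta>" unfolding L_def using d0 by (simp add: ln_div)
    finally have tl: "measure_pmf.prob (iid_list s p) {xs. real s * \<epsilon> \<le> sum_list (map g xs)} \<le> \<delta>"
      using tail by linarith
    have "measure_pmf.prob (iid_list s p) (UNIV - ?E)
        \<le> measure_pmf.prob (iid_list s p) {xs. real s * \<epsilon> \<le> sum_list (map g xs)}"
    proof (rule measure_pmf.finite_measure_mono_AE)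
      show "AE x in measure_pmf (iid_list s p). x \<in> UNIV - ?E \<longrightarrow> x \<in> {xs. real s * \<epsilon> \<le> sum_list (map g xs)}"
      proof (rule AE_pmfI)
        fix xs assume "xs \<in> set_pmf (iid_list s p)"
        then have len: "length xs = s" by (rule set_iid_list_len)
        show "xs \<in> UNIV - ?E \<longrightarrow> xs \<in> {xs. real s * \<epsilon> \<le> sum_list (map g xs)}"
        proof
          assume "xs \<in> UNIV - ?E"
          then have "sum_list (map f xs) / real s > \<mu> + \<epsilon>"
            unfolding buffer_penalty_def f_def using len by simp
          then have "sum_list (map f xs) > real s * (\<mu> + \<epsilon>)"
            using s1 by (simp add: field_simps)
          then show "xs \<in> {xs. real s * \<epsilon> \<le> sum_list (map g xs)}"
            unfolding g_def using len by (simp add: sum_list_map_minus algebra_simps)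
        qed
      qed
    qed simp
    moreover have "measure_pmf.prob (iid_list s p) (UNIV - ?E) = 1 - measure_pmf.prob (iid_list s p) ?E"
      using measure_pmf.prob_compl[of ?E "iid_list s p"] by simp
    ultimately show ?thesis using tl buf by simp
  qed
  then show "measure_pmf.prob (rsx_buffer s z (t - 1))
           {Bf. buffer_penalty l h z t Bf
                  \<le> allpairs_penalty l h z t + C * B * sqrt (ln (1 / \<delta>) / real s)} \<ge> 1 - \<delta>"
    unfolding k_def \<mu>_def \<epsilon>_def L_def .
qed

end
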